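(* Let $r>0$ and let $(X_t)_{t\ge0}$ be the Brownian motion with drift $X_t = X_0+B_t-rt$ ($B$ a standard Brownian motion started at $0$ independent of $X_0$), with $\tau_0:=\inf\{t\ge0:X_t=0\}$. If $\mu$ is a probability measure on $(0,+\infty)$ such that $\int_0^\infty x^3e^{rx}\mu(dx)<+\infty$, then for any $s\ge0$, $$\mathbb{E}_\mu\big[X_s^3e^{rX_s}\mid\tau_0>s\big]<+\infty.$$
   Context: $\mathbb{E}_\mu$ denotes expectation when $X_0\sim\mu$, and $\mathbb{E}_\mu[Z\mid\tau_0>s]=\mathbb{E}_\mu[Z\mathbf{1}_{\tau_0>s}]/\mathbb{P}_\mu(\tau_0>s)$. *)

theory Defs
  imports "HOL-Probability.Probability"
begin

definition standard_BM :: "'a measure \<Rightarrow> (real \<Rightarrow> 'a \<Rightarrow> real) \<Rightarrow> bool" where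
  "standard_BM M B \<longleftrightarrow>
     prob_space M \<and>
     (\<forall>t. B t \<in> borel_measurable M) \<and>
     (\<forall>\<omega>\<in>space M. B 0 \<omega> = 0) \<and>
     (\<forall>\<omega>\<in>space M. continuous_on {0..} (\<lambda>t. B t \<omega>)) \<and>
     (\<forall>s t. 0 \<le> s \<and> s < t \<longrightarrow>
        distributed M lborel (\<lambda>\<omega>. B t \<omega> - B s \<omega>) (normal_density 0 (sqrt (t - s)))) \<and>
     (\<forall>(n::nat) (ts::nat \<Rightarrow> real). 0 \<le> ts 0 \<and> (\<forall>i<n. ts i \<le> ts (Suc i)) \<longrightarrow>
        prob_space.indep_vars M (\<lambda>_. borel) (\<lambda>i \<omega>. B (ts (Suc i)) \<omega> - B (ts i) \<omega>) {..<n})"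

text \<open>Hitting time of 0 (value \<infinity> if 0 is never hit).\<close>
definition hit0 :: "(real \<Rightarrow> 'a \<Rightarrow> real) \<Rightarrow> 'a \<Rightarrow> ereal" where
  "hit0 X \<omega> = Inf (ereal ` {t. 0 \<le> t \<and> X t \<omega> = 0})"

end

theory Submission
  imports Defs
begin

lemma hit0_gt_iff:
  fixes X :: "real \<Rightarrow> 'a \<Rightarrow> real"
  assumes cont: "continuous_on {0..} (\<lambda>t. X t \<omega>)" and s: "s \<ge> 0"
  shows "hit0 X \<omega> > ereal s \<longleftrightarrow> (\<forall>t\<in>{0..s}. X t \<omega> \<noteq> 0)"
proof
  assume h: "hit0 X \<omega> > ereal s"
  show "\<forall>t\<in>{0..s}. X t \<omega> \<noteq> 0"
  proof (intro ballI notI)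
    fix t assume t: "t \<in> {0..s}" "X t \<omega> = 0"
    then have "hit0 X \<omega> \<le> ereal t" unfolding hit0_def by (auto intro!: Inf_lower)
    moreover have "ereal t \<le> ereal s" using t by simp
    ultimately show False using h by (meson leD order_trans)
  qed
next
  assume nz: "\<forall>t\<in>{0..s}. X t \<omega> \<noteq> 0"
  define Z where "Z = {t. 0 \<le> t \<and> X t \<omega> = 0}"
  define K where "K = Z \<inter> {0..s+1}"
  have "closed {t \<in> {0..}. X t \<omega> = 0}"
    by (rule continuous_closed_preimage_constant[OF cont]) auto
  then have "closed Z" unfolding Z_def by (simp add: atLeast_def)
  then have cK: "compact K" unfolding K_def using compact_Int_closed[of "{0..s+1}" Z] by (simp add: Int_commute)
  obtain c where c: "c > s" "\<forall>z\<in>Z. c \<le> z"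
  proof (cases "K = {}")
    case True
    have "\<forall>z\<in>Z. s + 1 \<le> z"
    proof
      fix z assume "z \<in> Z"
      then show "s + 1 \<le> z" using True unfolding K_def Z_def by (auto simp: not_le)
    qed
    then show ?thesis using that[of "s+1"] by simp
  next
    case False
    then obtain m where m: "m \<in> K" "\<forall>y\<in>K. m \<le> y" using compact_attains_inf[OF cK] by blast
    have "m > s" using m(1) nz unfolding K_def Z_def by force
    have "\<forall>z\<in>Z. min m (s+1) \<le> z"
    proof
      fix z assume z: "z \<in> Z"
      show "min m (s+1) \<le> z"
      proof (cases "z \<le> s + 1")
        case True
        then have "z \<in> K" using z unfolding K_def Z_def by auto
        then show ?thesis using m by force
      qed simp
    qed
    then show ?thesis using that[of "min m (s+1)"] \<open>m > s\<close> by simp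
  qed
  have "ereal c \<le> hit0 X \<omega>" unfolding hit0_def Z_def[symmetric] using c by (auto intro!: Inf_greatest)
  moreover have "ereal s < ereal c" using c by simp
  ultimately show "hit0 X \<omega> > ereal s" by (meson order_less_le_trans)
qed


lemma zero_free_meas:
  fixes X :: "real \<Rightarrow> 'a \<Rightarrow> real"
  assumes Xm: "\<And>t. X t \<in> borel_measurable M"
    and cont: "\<And>\<omega>. \<omega> \<in> space M \<Longrightarrow> continuous_on {0..} (\<lambda>t. X t \<omega>)" and s: "s \<ge> 0"
  shows "{\<omega>\<in>space M. \<forall>t\<in>{0..s}. X t \<omega> \<noteq> 0} \<in> sets M"
proof -
  define D where "D = insert s (\<rat> \<inter> {0..s})"
  have cD: "countable D" unfolding D_def by (simp add: countable_rat)
  have Dsub: "D \<subseteq> {0..s}" using s unfolding D_def by auto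
  have clD: "{0..s} \<subseteq> closure D"
  proof
    fix t assume t: "t \<in> {0..s}"
    show "t \<in> closure D"
    proof (cases "t = s")
      case True then show ?thesis unfolding D_def using closure_subset by blast
    next
      case False
      then have ts: "t < s" using t by auto
      show ?thesis unfolding closure_approachable
      proof (intro allI impI)
        fix e :: real assume e: "e > 0"
        obtain q where q: "q \<in> \<rat>" "t < q" "q < min s (t + e)"
          using Rats_dense_in_real[of t "min s (t+e)"] ts e by auto
        then have "q \<in> D" "dist q t < e" using t unfolding D_def by (auto simp: dist_real_def)
        then show "\<exists>y\<in>D. dist y t < e" by blast
      qed
    qed
  qed
  have eq: "(\<forall>t\<in>{0..s}. X t \<omega> \<noteq> 0) \<longleftrightarrow> (\<exists>n::nat. \<forall>q\<in>D. 1 / real (Suc n) \<le> \<bar>X q \<omega>\<bar>)"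
    if \<omega>: "\<omega> \<in> space M" for \<omega>
  proof
    have c0: "continuous_on {0..s} (\<lambda>t. \<bar>X t \<omega>\<bar>)"
      by (intro continuous_on_rabs continuous_on_subset[OF cont[OF \<omega>]]) auto
    assume nz: "\<forall>t\<in>{0..s}. X t \<omega> \<noteq> 0"
    obtain t0 where t0: "t0 \<in> {0..s}" "\<forall>y\<in>{0..s}. \<bar>X t0 \<omega>\<bar> \<le> \<bar>X y \<omega>\<bar>"
      using continuous_attains_inf[OF compact_Icc _ c0] s by auto
    have "\<bar>X t0 \<omega>\<bar> > 0" using nz t0 by auto
    then obtain m :: nat where m: "m > 0" "inverse (real m) < \<bar>X t0 \<omega>\<bar>"
      using ex_inverse_of_nat_less by blast
    define n where "n = m - 1"
    have n: "inverse (real (Suc n)) < \<bar>X t0 \<omega>\<bar>" using m unfolding n_def by simp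
    show "\<exists>n::nat. \<forall>q\<in>D. 1 / real (Suc n) \<le> \<bar>X q \<omega>\<bar>"
    proof (intro exI ballI)
      fix q assume "q \<in> D"
      then have "\<bar>X t0 \<omega>\<bar> \<le> \<bar>X q \<omega>\<bar>" using t0 Dsub by auto
      then show "1 / real (Suc n) \<le> \<bar>X q \<omega>\<bar>" using n by (simp add: inverse_eq_divide)
    qed
  next
    have c0: "continuous_on {0..s} (\<lambda>t. \<bar>X t \<omega>\<bar>)"
      by (intro continuous_on_rabs continuous_on_subset[OF cont[OF \<omega>]]) auto
    assume "\<exists>n::nat. \<forall>q\<in>D. 1 / real (Suc n) \<le> \<bar>X q \<omega>\<bar>"
    then obtain n :: nat where n: "\<forall>q\<in>D. 1 / real (Suc n) \<le> \<bar>X q \<omega>\<bar>" by blast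
    define C where "C = {0..s} \<inter> (\<lambda>t. \<bar>X t \<omega>\<bar>) -` {1 / real (Suc n)..}"
    have "closed C" unfolding C_def by (intro continuous_closed_preimage[OF c0]) auto
    moreover have "D \<subseteq> C" using n Dsub unfolding C_def by auto
    ultimately have "closure D \<subseteq> C" by (simp add: closure_minimal)
    then have "{0..s} \<subseteq> C" using clD by auto
    then show "\<forall>t\<in>{0..s}. X t \<omega> \<noteq> 0"
      unfolding C_def by (auto simp: subset_iff)
  qed
  have "{\<omega>\<in>space M. \<forall>t\<in>{0..s}. X t \<omega> \<noteq> 0} = {\<omega>\<in>space M. \<exists>n::nat. \<forall>q\<in>D. 1 / real (Suc n) \<le> \<bar>X q \<omega>\<bar>}"
    using eq by auto
  also have "\<dots> \<in> sets M"
    using cD Xm by measurable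
  finally show ?thesis .
qed


lemma indep_prod:
  fixes X0 :: "'a \<Rightarrow> real" and B :: "real \<Rightarrow> 'a \<Rightarrow> real" and f g :: "real \<Rightarrow> ennreal"
  assumes P: "prob_space M" and X0m: "X0 \<in> borel_measurable M" and Bm: "B t \<in> borel_measurable M"
    and indep: "prob_space.indep_set M
                    {X0 -` A \<inter> space M | A. A \<in> sets borel}
                    (sigma_sets (space M) (\<Union>t. {B t -` A \<inter> space M | A. A \<in> sets borel}))"
    and f: "f \<in> borel_measurable borel" and g: "g \<in> borel_measurable borel"
  shows "(\<integral>\<^sup>+\<omega>. f (X0 \<omega>) * g (B t \<omega>) \<partial>M) = (\<integral>\<^sup>+\<omega>. f (X0 \<omega>) \<partial>M) * (\<integral>\<^sup>+\<omega>. g (B t \<omega>) \<partial>M)"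
proof -
  interpret prob_space M by (rule P)
  define Y where "Y = (\<lambda>b::bool. if b then (\<lambda>\<omega>. f (X0 \<omega>)) else (\<lambda>\<omega>. g (B t \<omega>)))"
  have rv: "random_variable borel (Y i)" for i
    unfolding Y_def using X0m Bm f g by (cases i) auto
  have sub: "{Y i -` A \<inter> space M | A. A \<in> sets borel} \<subseteq>
      case_bool {X0 -` A \<inter> space M | A. A \<in> sets borel}
                (sigma_sets (space M) (\<Union>t. {B t -` A \<inter> space M | A. A \<in> sets borel})) i" for i
  proof (cases i)
    case True
    show ?thesis
    proof
      fix E assume "E \<in> {Y i -` A \<inter> space M | A. A \<in> sets borel}"
      then obtain A where A: "A \<in> sets (borel :: ennreal measure)" "E = Y i -` A \<inter> space M" by blast
      have "f -` A \<in> sets borel" using measurable_sets[OF f A(1)] by simp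
      moreover have "E = X0 -` (f -` A) \<inter> space M" using A True unfolding Y_def by auto
      ultimately show "E \<in> case_bool {X0 -` A \<inter> space M | A. A \<in> sets borel}
                (sigma_sets (space M) (\<Union>t. {B t -` A \<inter> space M | A. A \<in> sets borel})) i"
        using True by auto
    qed
  next
    case False
    show ?thesis
    proof
      fix E assume "E \<in> {Y i -` A \<inter> space M | A. A \<in> sets borel}"
      then obtain A where A: "A \<in> sets (borel :: ennreal measure)" "E = Y i -` A \<inter> space M" by blast
      have "g -` A \<in> sets borel" using measurable_sets[OF g A(1)] by simp
      moreover have "E = B t -` (g -` A) \<inter> space M" using A False unfolding Y_def by auto
      ultimately have "E \<in> (\<Union>t. {B t -` A \<inter> space M | A. A \<in> sets borel})" by blast
      then show "E \<in> case_bool {X0 -` A \<inter> space M | A. A \<in> sets borel}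
                (sigma_sets (space M) (\<Union>t. {B t -` A \<inter> space M | A. A \<in> sets borel})) i"
        using False by (auto intro: sigma_sets.Basic)
    qed
  qed
  have "indep_vars (\<lambda>_. borel) Y UNIV"
    unfolding indep_vars_def2 using rv
    by (intro conjI ballI indep_sets_mono_sets[OF indep[unfolded indep_set_def]] sub) auto
  from indep_vars_nn_integral[OF _ this] have
    "(\<integral>\<^sup>+\<omega>. (\<Prod>i\<in>UNIV. Y i \<omega>) \<partial>M) = (\<Prod>i\<in>UNIV. \<integral>\<^sup>+\<omega>. Y i \<omega> \<partial>M)" by simp
  then show ?thesis unfolding Y_def UNIV_bool by (simp add: mult.commute)
qed


lemma normal_exp_identity:
  assumes s: "s > 0"
  shows "normal_density 0 (sqrt s) y * exp (c * y) = exp (c^2 * s / 2) * normal_density (c * s) (sqrt s) y"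
proof -
  have "- (y - 0)\<^sup>2 / (2 * (sqrt s)\<^sup>2) + c * y = c^2 * s / 2 + (- (y - c * s)\<^sup>2 / (2 * (sqrt s)\<^sup>2))"
    using s by (simp add: field_simps power2_eq_square)
  then have "exp (- (y - 0)\<^sup>2 / (2 * (sqrt s)\<^sup>2)) * exp (c * y) = exp (c^2 * s / 2) * exp (- (y - c * s)\<^sup>2 / (2 * (sqrt s)\<^sup>2))"
    by (simp add: exp_add[symmetric])
  then show ?thesis unfolding normal_density_def by (simp add: algebra_simps)
qed

lemma bm_exp_fin:
  assumes BM: "standard_BM M B" and s: "s \<ge> 0"
  shows "(\<integral>\<^sup>+\<omega>. ennreal (exp (c * B s \<omega>)) \<partial>M) < \<infinity>"
proof (cases "s = 0")
  case True
  interpret prob_space M using BM by (simp add: standard_BM_def)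
  have "(\<integral>\<^sup>+\<omega>. ennreal (exp (c * B s \<omega>)) \<partial>M) = (\<integral>\<^sup>+\<omega>. 1 \<partial>M)"
    using BM True by (intro nn_integral_cong) (simp add: standard_BM_def)
  then show ?thesis by (simp add: emeasure_space_1)
next
  case False
  then have s0: "s > 0" using s by simp
  have B0: "\<And>\<omega>. \<omega> \<in> space M \<Longrightarrow> B 0 \<omega> = 0" using BM by (simp add: standard_BM_def)
  have D: "distributed M lborel (\<lambda>\<omega>. B s \<omega> - B 0 \<omega>) (normal_density 0 (sqrt (s - 0)))"
    using BM s0 unfolding standard_BM_def by blast
  have "(\<integral>\<^sup>+\<omega>. ennreal (exp (c * B s \<omega>)) \<partial>M) = (\<integral>\<^sup>+\<omega>. ennreal (exp (c * (B s \<omega> - B 0 \<omega>))) \<partial>M)"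
    using B0 by (intro nn_integral_cong) simp
  also have "\<dots> = (\<integral>\<^sup>+y. ennreal (normal_density 0 (sqrt s) y) * ennreal (exp (c * y)) \<partial>lborel)"
    using distributed_nn_integral[OF D, of "\<lambda>y. ennreal (exp (c * y))"] by simp
  also have "\<dots> = (\<integral>\<^sup>+y. ennreal (exp (c^2 * s / 2)) * ennreal (normal_density (c * s) (sqrt s) y) \<partial>lborel)"
    using normal_exp_identity[OF s0, of _ c]
    by (intro nn_integral_cong) (simp add: ennreal_mult[symmetric])
  also have "\<dots> = ennreal (exp (c^2 * s / 2)) * (\<integral>\<^sup>+y. ennreal (normal_density (c * s) (sqrt s) y) \<partial>lborel)"
    by (rule nn_integral_cmult) simp
  also have "(\<integral>\<^sup>+y. ennreal (normal_density (c * s) (sqrt s) y) \<partial>lborel) = 1"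
    using s0 by (subst nn_integral_eq_integral) (auto intro!: integrable_normal_density simp: integral_normal_density)
  finally show ?thesis by simp
qed


lemma ennreal_combo:
  fixes P Q R S :: real
  assumes "P \<ge> 0" "Q \<ge> 0" "R \<ge> 0" "S \<ge> 0"
  shows "ennreal (4*(P*Q + R*S)) = 4*(ennreal P * ennreal Q + ennreal R * ennreal S)"
proof -
  have "ennreal (4*(P*Q + R*S)) = ennreal 4 * ennreal (P*Q + R*S)"
    using assms by (intro ennreal_mult) auto
  also have "ennreal (P*Q + R*S) = ennreal (P*Q) + ennreal (R*S)"
    using assms by (intro ennreal_plus) auto
  also have "ennreal (P*Q) = ennreal P * ennreal Q" using assms by (intro ennreal_mult) auto
  also have "ennreal (R*S) = ennreal R * ennreal S" using assms by (intro ennreal_mult) auto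
  finally show ?thesis by simp
qed

lemma ptwise:
  fixes r a b u :: real
  assumes r: "r > 0" and a: "a \<ge> 0" and b: "b \<ge> 0" and u: "u \<le> a + b"
  shows "ennreal (u^3 * exp (r*u)) \<le> 4 * (ennreal (a^3*exp(r*a)) * ennreal (exp (r*b)) + ennreal (exp (r*a)) * ennreal (b^3*exp (r*b)))"
proof -
  have rhs: "4 * (ennreal (a^3*exp(r*a)) * ennreal (exp (r*b)) + ennreal (exp (r*a)) * ennreal (b^3*exp (r*b)))
     = ennreal (4 * ((a^3*exp(r*a)) * (exp (r*b)) + (exp (r*a)) * (b^3*exp (r*b))))"
    using a b by (intro ennreal_combo[symmetric]) auto
  have req: "4 * ((a^3*exp(r*a)) * (exp (r*b)) + (exp (r*a)) * (b^3*exp (r*b))) = 4*(a^3+b^3) * exp (r*(a+b))"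
    by (simp add: exp_add distrib_left distrib_right mult.assoc mult.left_commute)
  show ?thesis
  proof (cases "u \<le> 0")
    case True
    have "u^3 = u * u^2" by (simp add: power3_eq_cube power2_eq_square)
    also have "\<dots> \<le> 0" using True by (intro mult_nonpos_nonneg) auto
    finally have "u^3 * exp (r*u) \<le> 0" by (intro mult_nonpos_nonneg) auto
    then show ?thesis by (simp add: ennreal_neg)
  next
    case False
    have c1: "u^3 \<le> (a+b)^3" using False u by (intro power_mono) auto
    have c2: "exp (r*u) \<le> exp (r*(a+b))" using u r by simp
    have "0 \<le> 3*(a+b)*(a-b)^2" using a b by simp
    moreover have "4*(a^3+b^3) - (a+b)^3 = 3*(a+b)*(a-b)^2"
      by (simp add: power2_eq_square power3_eq_cube algebra_simps)
    ultimately have c3: "(a+b)^3 \<le> 4*(a^3+b^3)" by linarith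
    have "u^3 * exp (r*u) \<le> (a+b)^3 * exp (r*(a+b))"
      using c1 c2 False a b by (intro mult_mono) auto
    also have "\<dots> \<le> 4*(a^3+b^3) * exp (r*(a+b))"
      using c3 by (intro mult_right_mono) auto
    finally have "u^3 * exp (r*u) \<le> 4 * ((a^3*exp(r*a)) * (exp (r*b)) + (exp (r*a)) * (b^3*exp (r*b)))"
      unfolding req .
    then show ?thesis unfolding rhs by (rule ennreal_leI)
  qed
qed
lemma cube_le_exp:
  fixes r y :: real assumes r: "r > 0"
  shows "\<bar>y\<bar>^3 \<le> 27 / r^3 * exp (r * \<bar>y\<bar>)"
proof -
  define z where "z = r * \<bar>y\<bar> / 3"
  have z0: "z \<ge> 0" using r unfolding z_def by simp
  have "z \<le> exp z" using exp_ge_add_one_self[of z] by linarith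
  then have "z^3 \<le> (exp z)^3" using z0 by (intro power_mono) auto
  also have "(exp z)^3 = exp (r * \<bar>y\<bar>)" unfolding z_def by (simp add: exp_of_nat_mult[symmetric])
  finally have "(r * \<bar>y\<bar>)^3 / 27 \<le> exp (r * \<bar>y\<bar>)" unfolding z_def by (simp add: power_divide)
  then have "r^3 * \<bar>y\<bar>^3 \<le> 27 * exp (r * \<bar>y\<bar>)" by (simp add: power_mult_distrib)
  moreover have "r^3 > 0" using r by simp
  ultimately have "\<bar>y\<bar>^3 \<le> 27 * exp (r * \<bar>y\<bar>) / r^3"
    by (subst pos_le_divide_eq) (auto simp: mult.commute)
  then show ?thesis by (simp only: times_divide_eq_left)
qed

lemma exp_abs_le: "exp (c * \<bar>y\<bar>) \<le> exp (c * y) + exp ((-c) * y)" if "c \<ge> 0" for c y :: real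
  using that by (cases "y \<ge> 0") (auto simp: add_increasing2 add_increasing)

lemma H2_le:
  fixes r y :: real assumes r: "r > 0"
  shows "ennreal (\<bar>y\<bar>^3 * exp (r*\<bar>y\<bar>)) \<le> ennreal (27 / r^3) * (ennreal (exp ((2*r) * y)) + ennreal (exp ((-(2*r)) * y)))"
proof -
  have "\<bar>y\<bar>^3 * exp (r*\<bar>y\<bar>) \<le> 27 / r^3 * exp (r * \<bar>y\<bar>) * exp (r*\<bar>y\<bar>)"
    using cube_le_exp[OF r, of y] by (intro mult_right_mono) auto
  also have "\<dots> = 27 / r^3 * exp ((2*r) * \<bar>y\<bar>)" by (simp add: exp_add[symmetric])
  also have "\<dots> \<le> 27 / r^3 * (exp ((2*r) * y) + exp ((-(2*r)) * y))"
    using r exp_abs_le[of "2*r" y] by (intro mult_left_mono) auto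
  finally have le: "\<bar>y\<bar>^3 * exp (r*\<bar>y\<bar>) \<le> 27 / r^3 * (exp ((2*r) * y) + exp ((-(2*r)) * y))" .
  have eq: "ennreal (27 / r^3 * (exp ((2*r) * y) + exp ((-(2*r)) * y))) = ennreal (27 / r^3) * (ennreal (exp ((2*r) * y)) + ennreal (exp ((-(2*r)) * y)))"
    using r by (simp only: ennreal_mult ennreal_plus exp_ge_zero add_nonneg_nonneg divide_nonneg_nonneg zero_le_power less_imp_le order_refl zero_le_numeral)
  show ?thesis unfolding eq[symmetric] by (rule ennreal_leI[OF le])
qed

lemma G2_le:
  fixes r x :: real assumes r: "r > 0"
  shows "ennreal (exp (r * max x 0)) \<le> ennreal (exp r) + ennreal ((max x 0)^3 * exp (r * max x 0))"
proof -
  define m where "m = max x 0"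
  have m0: "m \<ge> 0" unfolding m_def by simp
  have "exp (r * m) \<le> exp r + m^3 * exp (r * m)"
  proof (cases "m \<le> 1")
    case True
    then have "exp (r*m) \<le> exp r" using r by simp
    then show ?thesis using m0 by (simp add: add_increasing2)
  next
    case False
    then have "1 \<le> m^3" by (simp add: one_le_power)
    then have "exp (r*m) \<le> m^3 * exp (r*m)" by simp
    then show ?thesis by (simp add: add_increasing)
  qed
  then have "ennreal (exp (r * m)) \<le> ennreal (exp r + m^3 * exp (r * m))" by (rule ennreal_leI)
  also have "\<dots> = ennreal (exp r) + ennreal (m^3 * exp (r * m))"
    using m0 by (intro ennreal_plus) auto
  finally show ?thesis unfolding m_def .
qed



theorem lemma4p2:
  fixes M :: "'a measure" and B :: "real \<Rightarrow> 'a \<Rightarrow> real" and X0 :: "'a \<Rightarrow> real"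
    and \<mu> :: "real measure" and r s :: real
  assumes r: "r > 0"
    and BM: "standard_BM M B"
    and X0_meas: "X0 \<in> borel_measurable M"
    and indep: "prob_space.indep_set M
                    {X0 -` A \<inter> space M | A. A \<in> sets borel}
                    (sigma_sets (space M) (\<Union>t. {B t -` A \<inter> space M | A. A \<in> sets borel}))"
    and mu_prob: "prob_space \<mu>" and mu_sets: "sets \<mu> = sets borel"
    and mu_pos: "\<mu> {..0} = 0"
    and law: "distr M borel X0 = \<mu>"
    and moment: "(\<integral>\<^sup>+ x. ennreal (x ^ 3 * exp (r * x)) * indicator {0<..} x \<partial>\<mu>) < \<infinity>"
    and s: "s \<ge> 0"
  shows "(let X = (\<lambda>t \<omega>. X0 \<omega> + B t \<omega> - r * t);
              A = {\<omega> \<in> space M. hit0 X \<omega> > ereal s}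
          in (\<integral>\<^sup>+ \<omega>. ennreal (X s \<omega> ^ 3 * exp (r * X s \<omega>)) * indicator A \<omega> \<partial>M)
               / emeasure M A < \<infinity>)"
proof -
  interpret P: prob_space M using BM by (simp add: standard_BM_def)
  have Bm[measurable]: "\<And>t. B t \<in> borel_measurable M" using BM by (simp add: standard_BM_def)
  note X0_meas[measurable]
  have Bc: "\<And>\<omega>. \<omega> \<in> space M \<Longrightarrow> continuous_on {0..} (\<lambda>t. B t \<omega>)" using BM by (simp add: standard_BM_def)
  define X where "X = (\<lambda>t \<omega>. X0 \<omega> + B t \<omega> - r * t)"
  define A where "A = {\<omega> \<in> space M. hit0 X \<omega> > ereal s}"
  have Xm: "\<And>t. X t \<in> borel_measurable M" unfolding X_def by measurable
  have Xc: "\<And>\<omega>. \<omega> \<in> space M \<Longrightarrow> continuous_on {0..} (\<lambda>t. X t \<omega>)"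
    unfolding X_def by (intro continuous_intros Bc)
  have hg: "hit0 X \<omega> > ereal s \<longleftrightarrow> (\<forall>t\<in>{0..s}. X t \<omega> \<noteq> 0)" if "\<omega> \<in> space M" for \<omega>
    using hit0_gt_iff[of X \<omega> s, OF Xc[OF that] s] .
  have A_eq: "A = {\<omega>\<in>space M. \<forall>t\<in>{0..s}. X t \<omega> \<noteq> 0}"
    unfolding A_def using hg by auto
  have Am: "A \<in> sets M" unfolding A_eq by (rule zero_free_meas[OF Xm Xc s])
  define G1 where "G1 = (\<lambda>x::real. ennreal ((max x 0)^3 * exp (r * max x 0)))"
  define G2 where "G2 = (\<lambda>x::real. ennreal (exp (r * max x 0)))"
  define H1 where "H1 = (\<lambda>y::real. ennreal (exp (r * \<bar>y\<bar>)))"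
  define H2 where "H2 = (\<lambda>y::real. ennreal (\<bar>y\<bar>^3 * exp (r * \<bar>y\<bar>)))"
  have mG1[measurable]: "G1 \<in> borel_measurable borel" unfolding G1_def by measurable
  have mG2[measurable]: "G2 \<in> borel_measurable borel" unfolding G2_def by measurable
  have mH1[measurable]: "H1 \<in> borel_measurable borel" unfolding H1_def by measurable
  have mH2[measurable]: "H2 \<in> borel_measurable borel" unfolding H2_def by measurable
  have pt: "ennreal (X s \<omega> ^ 3 * exp (r * X s \<omega>)) \<le> 4 * (G1 (X0 \<omega>) * H1 (B s \<omega>) + G2 (X0 \<omega>) * H2 (B s \<omega>))" for \<omega>
  proof -
    have "0 \<le> r * s" using r s by simp
    then have "X s \<omega> \<le> max (X0 \<omega>) 0 + \<bar>B s \<omega>\<bar>" unfolding X_def by linarith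
    then show ?thesis unfolding G1_def G2_def H1_def H2_def by (intro ptwise r) auto
  qed
  have muG: "(\<integral>\<^sup>+\<omega>. G (X0 \<omega>) \<partial>M) = (\<integral>\<^sup>+x. G x \<partial>\<mu>)" if [measurable]: "G \<in> borel_measurable borel" for G :: "real \<Rightarrow> ennreal"
  proof -
    have "(\<integral>\<^sup>+x. G x \<partial>\<mu>) = (\<integral>\<^sup>+x. G x \<partial>distr M borel X0)" using law by simp
    also have "\<dots> = (\<integral>\<^sup>+\<omega>. G (X0 \<omega>) \<partial>M)" by (simp add: nn_integral_distr)
    finally show ?thesis by simp
  qed
  have G1mu: "(\<integral>\<^sup>+x. G1 x \<partial>\<mu>) = (\<integral>\<^sup>+ x. ennreal (x ^ 3 * exp (r * x)) * indicator {0<..} x \<partial>\<mu>)"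
    by (intro nn_integral_cong) (auto simp: G1_def indicator_def max_def)
  have fG1: "(\<integral>\<^sup>+\<omega>. G1 (X0 \<omega>) \<partial>M) < \<infinity>" using muG[OF mG1] G1mu moment by simp
  have G1mu_meas: "G1 \<in> borel_measurable \<mu>" using mG1 measurable_cong_sets[OF mu_sets refl] by blast
  have fG2: "(\<integral>\<^sup>+\<omega>. G2 (X0 \<omega>) \<partial>M) < \<infinity>"
  proof -
    have "(\<integral>\<^sup>+\<omega>. G2 (X0 \<omega>) \<partial>M) = (\<integral>\<^sup>+x. G2 x \<partial>\<mu>)" by (rule muG[OF mG2])
    also have "\<dots> \<le> (\<integral>\<^sup>+x. ennreal (exp r) + G1 x \<partial>\<mu>)"
      by (intro nn_integral_mono) (simp add: G1_def G2_def G2_le[OF r])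
    also have "\<dots> = ennreal (exp r) * emeasure \<mu> (space \<mu>) + (\<integral>\<^sup>+x. G1 x \<partial>\<mu>)"
      using G1mu_meas by (subst nn_integral_add) (auto simp: nn_integral_const)
    also have "emeasure \<mu> (space \<mu>) = 1" using mu_prob prob_space.emeasure_space_1 by blast
    finally have le: "(\<integral>\<^sup>+\<omega>. G2 (X0 \<omega>) \<partial>M) \<le> ennreal (exp r) + (\<integral>\<^sup>+x. G1 x \<partial>\<mu>)" by simp
    have "(\<integral>\<^sup>+x. G1 x \<partial>\<mu>) < \<infinity>" using G1mu moment by simp
    then have "ennreal (exp r) + (\<integral>\<^sup>+x. G1 x \<partial>\<mu>) < \<infinity>" by (simp add: less_top)
    then show ?thesis using le by (rule le_less_trans[rotated])
  qed
  have fE: "(\<integral>\<^sup>+\<omega>. ennreal (exp (c * B s \<omega>)) \<partial>M) < \<infinity>" for c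
    by (rule bm_exp_fin[OF BM s])
  have fH1: "(\<integral>\<^sup>+\<omega>. H1 (B s \<omega>) \<partial>M) < \<infinity>"
  proof -
    have "(\<integral>\<^sup>+\<omega>. H1 (B s \<omega>) \<partial>M) \<le> (\<integral>\<^sup>+\<omega>. ennreal (exp (r * B s \<omega>)) + ennreal (exp ((-r) * B s \<omega>)) \<partial>M)"
    proof (intro nn_integral_mono)
      fix \<omega>
      have "H1 (B s \<omega>) \<le> ennreal (exp (r * B s \<omega>) + exp ((-r) * B s \<omega>))"
        unfolding H1_def using exp_abs_le[of r "B s \<omega>"] r by (intro ennreal_leI) auto
      also have "\<dots> = ennreal (exp (r * B s \<omega>)) + ennreal (exp ((-r) * B s \<omega>))" by (intro ennreal_plus) auto
      finally show "H1 (B s \<omega>) \<le> ennreal (exp (r * B s \<omega>)) + ennreal (exp ((-r) * B s \<omega>))" .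
    qed
    also have "\<dots> = (\<integral>\<^sup>+\<omega>. ennreal (exp (r * B s \<omega>)) \<partial>M) + (\<integral>\<^sup>+\<omega>. ennreal (exp ((-r) * B s \<omega>)) \<partial>M)"
      by (rule nn_integral_add) auto
    also have "\<dots> < \<infinity>" using fE[of r] fE[of "-r"] by (simp add: less_top)
    finally show ?thesis .
  qed
  have fH2: "(\<integral>\<^sup>+\<omega>. H2 (B s \<omega>) \<partial>M) < \<infinity>"
  proof -
    have "(\<integral>\<^sup>+\<omega>. H2 (B s \<omega>) \<partial>M) \<le> (\<integral>\<^sup>+\<omega>. ennreal (27 / r^3) * (ennreal (exp ((2*r) * B s \<omega>)) + ennreal (exp ((-(2*r)) * B s \<omega>))) \<partial>M)"
      unfolding H2_def by (intro nn_integral_mono H2_le r)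
    also have "\<dots> = ennreal (27 / r^3) * ((\<integral>\<^sup>+\<omega>. ennreal (exp ((2*r) * B s \<omega>)) \<partial>M) + (\<integral>\<^sup>+\<omega>. ennreal (exp ((-(2*r)) * B s \<omega>)) \<partial>M))"
      by (subst nn_integral_cmult) (auto simp: nn_integral_add)
    also have "\<dots> < \<infinity>" using fE[of "2*r"] fE[of "-(2*r)"] by (simp add: ennreal_mult_less_top)
    finally show ?thesis .
  qed
  have ip1: "(\<integral>\<^sup>+\<omega>. G1 (X0 \<omega>) * H1 (B s \<omega>) \<partial>M) = (\<integral>\<^sup>+\<omega>. G1 (X0 \<omega>) \<partial>M) * (\<integral>\<^sup>+\<omega>. H1 (B s \<omega>) \<partial>M)"
    by (rule indep_prod[OF P.prob_space_axioms X0_meas Bm indep mG1 mH1])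
  have ip2: "(\<integral>\<^sup>+\<omega>. G2 (X0 \<omega>) * H2 (B s \<omega>) \<partial>M) = (\<integral>\<^sup>+\<omega>. G2 (X0 \<omega>) \<partial>M) * (\<integral>\<^sup>+\<omega>. H2 (B s \<omega>) \<partial>M)"
    by (rule indep_prod[OF P.prob_space_axioms X0_meas Bm indep mG2 mH2])
  have fin: "(\<integral>\<^sup>+\<omega>. ennreal (X s \<omega> ^ 3 * exp (r * X s \<omega>)) * indicator A \<omega> \<partial>M) < \<infinity>"
  proof -
    have "(\<integral>\<^sup>+\<omega>. ennreal (X s \<omega> ^ 3 * exp (r * X s \<omega>)) * indicator A \<omega> \<partial>M)
        \<le> (\<integral>\<^sup>+\<omega>. 4 * (G1 (X0 \<omega>) * H1 (B s \<omega>) + G2 (X0 \<omega>) * H2 (B s \<omega>)) \<partial>M)"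
    proof (intro nn_integral_mono)
      fix \<omega>
      have "ennreal (X s \<omega> ^ 3 * exp (r * X s \<omega>)) * indicator A \<omega> \<le> ennreal (X s \<omega> ^ 3 * exp (r * X s \<omega>))"
        by (simp add: indicator_def)
      then show "ennreal (X s \<omega> ^ 3 * exp (r * X s \<omega>)) * indicator A \<omega> \<le> 4 * (G1 (X0 \<omega>) * H1 (B s \<omega>) + G2 (X0 \<omega>) * H2 (B s \<omega>))"
        using pt[of \<omega>] by (rule order_trans)
    qed
    also have "\<dots> = 4 * ((\<integral>\<^sup>+\<omega>. G1 (X0 \<omega>) * H1 (B s \<omega>) \<partial>M) + (\<integral>\<^sup>+\<omega>. G2 (X0 \<omega>) * H2 (B s \<omega>) \<partial>M))"
      by (subst nn_integral_cmult) (auto simp: nn_integral_add)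
    also have "\<dots> < \<infinity>" unfolding ip1 ip2 using fG1 fG2 fH1 fH2
      by (simp add: ennreal_mult_less_top)
    finally show ?thesis .
  qed
  have main: "(\<integral>\<^sup>+\<omega>. ennreal (X s \<omega> ^ 3 * exp (r * X s \<omega>)) * indicator A \<omega> \<partial>M) / emeasure M A < \<infinity>"
  proof (cases "emeasure M A = 0")
    case True
    have "AE \<omega> in M. \<omega> \<notin> A" using True Am by (intro AE_not_in) (simp add: null_sets_def)
    then have "(\<integral>\<^sup>+\<omega>. ennreal (X s \<omega> ^ 3 * exp (r * X s \<omega>)) * indicator A \<omega> \<partial>M) = (\<integral>\<^sup>+\<omega>. 0 \<partial>M)"
      by (intro nn_integral_cong_AE) (auto elim!: AE_mp)
    then show ?thesis by simp
  next
    case False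
    define I where "I = (\<integral>\<^sup>+\<omega>. ennreal (X s \<omega> ^ 3 * exp (r * X s \<omega>)) * indicator A \<omega> \<partial>M)"
    have nt: "I \<noteq> top" using fin unfolding I_def by (simp add: less_top)
    have "I / emeasure M A \<noteq> top"
    proof
      assume "I / emeasure M A = top"
      then show False using ennreal_divide_eq_top_iff[of I "emeasure M A"] nt False by blast
    qed
    then show ?thesis unfolding I_def by (simp add: less_top)
  qed
  then show ?thesis by (simp add: Let_def X_def A_def)
qed

end
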